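(* Let $\Omega \subset \mathbb{R}^N$ be open and bounded, $\alpha \in (0,N)$, $\beta \in (0,N]$, and $p=N/\alpha$, $p'=\frac{N}{N-\alpha}$. There exist constants $c',C'>0$, depending only on $\alpha$, $N$, $\beta$ and $\Omega$, such that \[ \int_\Omega \exp\left(c'|I_\alpha f |^{p^\prime} \right)d\mathcal{H}_\infty^{\beta} \leq C' \] for all $f \in L^{N/\alpha}(\Omega)$ with $\|f\|_{L^{N/\alpha}(\Omega)}\leq 1$.
   Context: For $\alpha\in(0,N)$ the Riesz potential is $I_\alpha f(x) = \frac{1}{\gamma(\alpha)}\int_{\mathbb{R}^N} \frac{f(y)}{|x-y|^{N-\alpha}}\,dy$ with $\gamma(\alpha)=\pi^{N/2}2^{\alpha}\Gamma(\alpha/2)\Gamma((N-\alpha)/2)^{-1}$; a function defined on $\Omega$ is extended by zero outside $\Omega$. The Hausdorff content is $\mathcal{H}_{\infty}^{\beta}(E):=\inf\{\sum_{i} \omega_{\beta} r_i^{\beta}:E\subset \bigcup_{i} B(x_i,r_i)\}$ (countable coverings by balls of arbitrary radii), $\omega_{\beta} = \pi^{\beta/2}/\Gamma(\frac{\beta}{2}+1)$. For a nonnegative function $g$ on $\Omega$, the integral with respect to $\mathcal{H}^\beta_\infty$ is the Choquet integral $\int_\Omega g\,d\mathcal{H}^\beta_\infty := \int_0^\infty \mathcal{H}^\beta_\infty(\{x\in\Omega: g(x)>t\})\,dt$. *)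

theory Defs
  imports "HOL-Analysis.Analysis"
begin

definition riesz_gamma :: "nat \<Rightarrow> real \<Rightarrow> real" where
  "riesz_gamma N \<alpha> = pi powr (real N / 2) * 2 powr \<alpha> * Gamma (\<alpha> / 2) / Gamma ((real N - \<alpha>) / 2)"

definition riesz_potential :: "real \<Rightarrow> ('a::euclidean_space \<Rightarrow> real) \<Rightarrow> 'a \<Rightarrow> real" where
  "riesz_potential \<alpha> f x =
     (1 / riesz_gamma DIM('a) \<alpha>) *
     (\<integral> y. f y / norm (x - y) powr (real DIM('a) - \<alpha>) \<partial>lebesgue)"

definition riesz_potential_on :: "real \<Rightarrow> 'a::euclidean_space set \<Rightarrow> ('a \<Rightarrow> real) \<Rightarrow> 'a \<Rightarrow> real" where
  "riesz_potential_on \<alpha> \<Omega> f = riesz_potential \<alpha> (\<lambda>y. if y \<in> \<Omega> then f y else 0)"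

definition omega_const :: "real \<Rightarrow> real" where
  "omega_const \<beta> = pi powr (\<beta> / 2) / Gamma (\<beta> / 2 + 1)"

definition hausdorff_content :: "real \<Rightarrow> 'a::euclidean_space set \<Rightarrow> ennreal" where
  "hausdorff_content \<beta> E =
     Inf {(\<Sum>i. ennreal (omega_const \<beta> * r i powr \<beta>)) | (c :: nat \<Rightarrow> 'a) (r :: nat \<Rightarrow> real).
            (\<forall>i. r i > 0) \<and> E \<subseteq> (\<Union>i. ball (c i) (r i))}"

definition choquet_integral :: "real \<Rightarrow> 'a::euclidean_space set \<Rightarrow> ('a \<Rightarrow> real) \<Rightarrow> ennreal" where
  "choquet_integral \<beta> \<Omega> g =
     (\<integral>\<^sup>+ t \<in> {0..}. hausdorff_content \<beta> {x \<in> \<Omega>. g x > t} \<partial>lborel)"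

end

theory Submission
  imports Defs "HOL-Analysis.Analysis"
begin

lemma young_mu:
  fixes p q x \<mu> :: real
  assumes pq: "p > 1" "q > 1" "1/p + 1/q = 1" and x: "x \<ge> 0" and mu: "\<mu> > 0"
  shows "x \<le> \<mu> powr p * x powr p / p + \<mu> powr (-q) / q"
proof -
  have "(\<mu> * x) * (1/\<mu>) \<le> (\<mu> * x) powr p / p + (1/\<mu>) powr q / q"
    by (rule Youngs_inequality) (use pq x mu in auto)
  moreover have "(\<mu> * x) * (1/\<mu>) = x" using mu by simp
  moreover have "(\<mu> * x) powr p = \<mu> powr p * x powr p" using mu x by (simp add: powr_mult)
  moreover have "(1/\<mu>) powr q = \<mu> powr (-q)" using mu by (simp add: powr_minus_divide powr_divide)
  ultimately show ?thesis by simp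
qed

lemma young_opt:
  fixes X :: ennreal and p q a m :: real
  assumes pq: "p > 1" "q > 1" "1/p + 1/q = 1" and a: "a \<ge> 0" and m: "m \<ge> 0"
    and H: "\<And>\<mu>. \<mu> > 0 \<Longrightarrow> X \<le> ennreal (\<mu> powr p * a / p + \<mu> powr (-q) * m / q)"
  shows "X \<le> ennreal (a powr (1/p) * m powr (1/q))"
proof (cases "a = 0 \<or> m = 0")
  case True
  have "X \<le> 0"
  proof (rule ennreal_le_epsilon)
    fix e :: real assume e: "0 < e"
    show "X \<le> 0 + ennreal e"
    proof (cases "a = 0")
      case a0: True
      show ?thesis
      proof (cases "m = 0")
        case True
        then show ?thesis using H[of 1] a0 by simp
      next
        case False
        then have mpos: "m > 0" using m by simp
        define \<mu> where "\<mu> = (m / (q * e)) powr (1/q)"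
        have mu: "\<mu> > 0" using mpos e pq by (simp add: \<mu>_def)
        have "\<mu> powr (-q) = (m / (q*e)) powr (-1)"
          unfolding \<mu>_def using pq by (simp add: powr_powr)
        also have "\<dots> = q * e / m" using mpos e pq by (simp add: powr_minus_divide)
        finally have "\<mu> powr (-q) * m / q = e" using mpos pq by simp
        then show ?thesis using H[OF mu] a0 by simp
      qed
    next
      case False
      then have apos: "a > 0" and m0: "m = 0" using a True by auto
      define \<mu> where "\<mu> = (p * e / a) powr (1/p)"
      have mu: "\<mu> > 0" using apos e pq by (simp add: \<mu>_def)
      have "\<mu> powr p = p * e / a"
        unfolding \<mu>_def using pq apos e by (simp add: powr_powr)
      then have "\<mu> powr p * a / p = e" using apos pq by simp
      then show ?thesis using H[OF mu] m0 by simp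
    qed
  qed
  then show ?thesis by (simp add: order_trans)
next
  case False
  then have apos: "a > 0" and mpos: "m > 0" using a m by auto
  have pqs: "p + q = p * q" using pq by (simp add: field_simps)
  define \<mu> where "\<mu> = (m / a) powr (1/(p+q))"
  have mu: "\<mu> > 0" using apos mpos by (simp add: \<mu>_def)
  have e1: "\<mu> powr p = (m/a) powr (1/q)"
    unfolding \<mu>_def using pq pqs by (simp add: powr_powr)
  have e2: "\<mu> powr (-q) = (m/a) powr (-(1/p))"
    unfolding \<mu>_def using pq pqs by (simp add: powr_powr)
  have t1: "\<mu> powr p * a = a powr (1/p) * m powr (1/q)"
  proof -
    have "\<mu> powr p * a = m powr (1/q) * (a powr (-(1/q)) * a powr 1)"
      using e1 apos mpos by (simp add: powr_divide powr_minus_divide)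
    also have "a powr (-(1/q)) * a powr 1 = a powr (1/p)"
    proof -
      have "1/p = -(1/q) + 1" using pq by linarith
      then show ?thesis by (simp only: powr_add)
    qed
    finally show ?thesis by simp
  qed
  have t2: "\<mu> powr (-q) * m = a powr (1/p) * m powr (1/q)"
  proof -
    have "\<mu> powr (-q) * m = a powr (1/p) * (m powr (-(1/p)) * m powr 1)"
      using e2 apos mpos by (simp add: powr_divide powr_minus_divide)
    also have "m powr (-(1/p)) * m powr 1 = m powr (1/q)"
    proof -
      have "1/q = -(1/p) + 1" using pq by linarith
      then show ?thesis by (simp only: powr_add)
    qed
    finally show ?thesis by simp
  qed
  have "\<mu> powr p * a / p + \<mu> powr (-q) * m / q = a powr (1/p) * m powr (1/q) * (1/p + 1/q)"
    using t1 t2 by (simp add: field_simps)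
  then show ?thesis using H[OF mu] pq by simp
qed

lemma discrete_holder:
  fixes p q :: real and a :: "nat \<Rightarrow> real"
  assumes pq: "p > 1" "q > 1" "1/p + 1/q = 1" and a: "\<And>j. a j \<ge> 0"
    and s: "(\<Sum>j<K. a j) \<le> 1"
  shows "(\<Sum>j<K. a j powr (1/p)) \<le> real K powr (1/q)"
proof (cases "K = 0")
  case True then show ?thesis by simp
next
  case False
  define \<mu> where "\<mu> = real K powr (1/(p*q))"
  have mu: "\<mu> > 0" using False by (simp add: \<mu>_def)
  have "(\<Sum>j<K. a j powr (1/p)) \<le> (\<Sum>j<K. \<mu> powr p * a j / p + \<mu> powr (-q) / q)"
  proof (rule sum_mono)
    fix j
    have "a j powr (1/p) \<le> \<mu> powr p * (a j powr (1/p)) powr p / p + \<mu> powr (-q) / q"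
      by (rule young_mu) (use pq mu in auto)
    also have "(a j powr (1/p)) powr p = a j" using pq a[of j] by (simp add: powr_powr)
    finally show "a j powr (1/p) \<le> \<mu> powr p * a j / p + \<mu> powr (-q) / q" .
  qed
  also have "\<dots> = \<mu> powr p / p * (\<Sum>j<K. a j) + real K * (\<mu> powr (-q) / q)"
    by (simp add: sum.distrib sum_distrib_left sum_divide_distrib)
  also have "\<dots> \<le> \<mu> powr p / p + real K * (\<mu> powr (-q) / q)"
  proof -
    have "\<mu> powr p / p * (\<Sum>j<K. a j) \<le> \<mu> powr p / p * 1"
      by (rule mult_left_mono) (use s pq in auto)
    then show ?thesis by simp
  qed
  also have "\<mu> powr p = real K powr (1/q)" unfolding \<mu>_def using pq by (simp add: powr_powr)
  also have "real K * (\<mu> powr (-q) / q) = real K powr (1/q) / q"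
  proof -
    have "\<mu> powr (-q) = real K powr (-(1/p))" unfolding \<mu>_def using pq by (simp add: powr_powr)
    then have "real K * \<mu> powr (-q) = real K powr 1 * real K powr (-(1/p))" using False by simp
    also have "\<dots> = real K powr (1/q)"
    proof -
      have "1/q = 1 + -(1/p)" using pq by linarith
      then show ?thesis by (simp only: powr_add)
    qed
    finally show ?thesis by simp
  qed
  also have "real K powr (1/q) / p + real K powr (1/q) / q = real K powr (1/q) * (1/p + 1/q)"
    by (simp add: field_simps)
  finally show ?thesis using pq by simp
qed

lemma omega_pos: "0 < omega_const \<beta>" if "\<beta> > 0"
  unfolding omega_const_def using that by (simp add: Gamma_real_pos)

lemma hc_mono:
  assumes "E \<subseteq> F"
  shows "hausdorff_content \<beta> E \<le> hausdorff_content \<beta> F"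
  unfolding hausdorff_content_def
  by (rule Inf_superset_mono) (use assms in blast)

lemma hc_le_seq:
  fixes c :: "nat \<Rightarrow> 'a::euclidean_space"
  assumes "\<And>i. r i > 0" "E \<subseteq> (\<Union>i. ball (c i) (r i))"
  shows "hausdorff_content \<beta> E \<le> (\<Sum>i. ennreal (omega_const \<beta> * r i powr \<beta>))"
  unfolding hausdorff_content_def
  by (rule Inf_lower) (use assms in blast)

lemma hc_le_countable:
  fixes c :: "'i \<Rightarrow> 'a::euclidean_space"
  assumes I: "countable I" and r: "\<And>i. i \<in> I \<Longrightarrow> r i > 0" and beta: "\<beta> > 0"
    and E: "E \<subseteq> (\<Union>i\<in>I. ball (c i) (r i))"
  shows "hausdorff_content \<beta> E \<le> (\<integral>\<^sup>+ i. ennreal (omega_const \<beta> * r i powr \<beta>) \<partial>count_space I)"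
proof (rule ennreal_le_epsilon)
  fix e :: real assume e: "0 < e"
  define w where "w = omega_const \<beta>"
  have w: "w > 0" using omega_pos[OF beta] w_def by simp
  define pad where "pad n = (e / w * (1/2)^Suc n) powr (1/\<beta>)" for n :: nat
  have padpos: "pad n > 0" for n using e w by (simp add: pad_def)
  have padb: "pad n powr \<beta> = e / w * (1/2)^Suc n" for n
    using e w beta by (simp add: pad_def powr_powr)
  define J where "J = to_nat_on I ` I"
  have bij: "bij_betw (to_nat_on I) I J" unfolding J_def using I
    by (simp add: bij_betw_imageI inj_on_to_nat_on)
  define cc where "cc n = (if n \<in> J then c (from_nat_into I n) else 0)" for n
  define rr where "rr n = (if n \<in> J then r (from_nat_into I n) else pad n)" for n
  have rrpos: "rr n > 0" for n
  proof (cases "n \<in> J")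
    case True
    then obtain i where "i \<in> I" "n = to_nat_on I i" unfolding J_def by auto
    then show ?thesis using I r padpos by (simp add: rr_def)
  qed (simp add: rr_def padpos)
  have cov: "E \<subseteq> (\<Union>n. ball (cc n) (rr n))"
  proof
    fix x assume "x \<in> E"
    then obtain i where i: "i \<in> I" "x \<in> ball (c i) (r i)" using E by auto
    let ?n = "to_nat_on I i"
    have "?n \<in> J" using i unfolding J_def by auto
    then have "x \<in> ball (cc ?n) (rr ?n)" using i I by (simp add: cc_def rr_def)
    then show "x \<in> (\<Union>n. ball (cc n) (rr n))" by blast
  qed
  have "hausdorff_content \<beta> E \<le> (\<Sum>n. ennreal (w * rr n powr \<beta>))"
    using hc_le_seq[OF rrpos cov] w_def by simp
  also have "\<dots> = (\<integral>\<^sup>+ n. ennreal (w * rr n powr \<beta>) \<partial>count_space UNIV)"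
    by (simp add: nn_integral_count_space_nat)
  also have "\<dots> \<le> (\<integral>\<^sup>+ n. ennreal (w * r (from_nat_into I n) powr \<beta>) * indicator J n
                    + ennreal (e * (1/2)^Suc n) \<partial>count_space UNIV)"
    by (rule nn_integral_mono) (use w in \<open>auto simp: rr_def padb indicator_def\<close>)
  also have "\<dots> = (\<integral>\<^sup>+ n. ennreal (w * r (from_nat_into I n) powr \<beta>) * indicator J n \<partial>count_space UNIV)
                   + (\<integral>\<^sup>+ n. ennreal (e * (1/2)^Suc n) \<partial>count_space UNIV)"
    by (rule nn_integral_add) auto
  also have "(\<integral>\<^sup>+ n. ennreal (w * r (from_nat_into I n) powr \<beta>) * indicator J n \<partial>count_space UNIV)
     = (\<integral>\<^sup>+ n. ennreal (w * r (from_nat_into I n) powr \<beta>) \<partial>count_space J)"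
    by (simp add: nn_integral_count_space_indicator)
  also have "\<dots> = (\<integral>\<^sup>+ i. ennreal (w * r (from_nat_into I (to_nat_on I i)) powr \<beta>) \<partial>count_space I)"
    by (rule nn_integral_bij_count_space[OF bij, symmetric])
  also have "\<dots> = (\<integral>\<^sup>+ i. ennreal (w * r i powr \<beta>) \<partial>count_space I)"
    by (rule nn_integral_cong) (use I in simp)
  also have "(\<integral>\<^sup>+ n. ennreal (e * (1/2)^Suc n) \<partial>count_space UNIV) = ennreal e"
  proof -
    have "(\<lambda>n. e * (1/2)^Suc n) sums (e * 1)"
      by (rule sums_mult) (rule power_half_series)
    then have "(\<lambda>n. e * (1/2)^Suc n) sums e" by simp
    then show ?thesis using e
      by (simp add: nn_integral_count_space_nat suminf_ennreal2 sums_summable sums_unique[symmetric])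
  qed
  finally show "hausdorff_content \<beta> E \<le> (\<integral>\<^sup>+ i. ennreal (omega_const \<beta> * r i powr \<beta>) \<partial>count_space I) + ennreal e"
    using w_def by simp
qed

lemma holder_set:
  fixes h :: "'a::euclidean_space \<Rightarrow> real"
  assumes pq: "p > 1" "q > 1" "1/p + 1/q = 1"
    and h: "h \<in> borel_measurable lebesgue" "\<And>y. h y \<ge> 0"
    and A: "A \<in> sets lebesgue"
    and a: "(\<integral>\<^sup>+ y. ennreal (h y powr p) * indicator A y \<partial>lebesgue) = ennreal a" "a \<ge> 0"
    and m: "emeasure lebesgue A \<le> ennreal m" "m \<ge> 0"
  shows "(\<integral>\<^sup>+ y. ennreal (h y) * indicator A y \<partial>lebesgue) \<le> ennreal (a powr (1/p) * m powr (1/q))"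
proof (rule young_opt[OF pq a(2) m(2)])
  fix \<mu> :: real assume mu: "\<mu> > 0"
  have c1: "\<mu> powr p / p \<ge> 0" and c2: "\<mu> powr (-q) / q \<ge> 0" using pq by auto
  have "(\<integral>\<^sup>+ y. ennreal (h y) * indicator A y \<partial>lebesgue)
     \<le> (\<integral>\<^sup>+ y. ennreal (\<mu> powr p / p) * (ennreal (h y powr p) * indicator A y)
                + ennreal (\<mu> powr (-q) / q) * indicator A y \<partial>lebesgue)"
  proof (rule nn_integral_mono)
    fix y
    have "h y \<le> \<mu> powr p * h y powr p / p + \<mu> powr (-q) / q"
      by (rule young_mu) (use pq h mu in auto)
    also have "\<mu> powr p * h y powr p / p = \<mu> powr p / p * h y powr p" by simp
    finally have "ennreal (h y) \<le> ennreal (\<mu> powr p / p * h y powr p + \<mu> powr (-q) / q)"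
      by (rule ennreal_leI)
    also have "\<dots> = ennreal (\<mu> powr p / p) * ennreal (h y powr p) + ennreal (\<mu> powr (-q) / q)"
    proof -
      have n1: "0 \<le> \<mu> powr p / p * h y powr p" using c1 by (intro mult_nonneg_nonneg) auto
      have e1: "ennreal (\<mu> powr p / p * h y powr p) = ennreal (\<mu> powr p / p) * ennreal (h y powr p)"
        using c1 by (intro ennreal_mult) auto
      show ?thesis by (simp only: ennreal_plus[OF n1 c2] e1)
    qed
    finally have "ennreal (h y) \<le> ennreal (\<mu> powr p / p) * ennreal (h y powr p) + ennreal (\<mu> powr (-q) / q)" .
    then show "ennreal (h y) * indicator A y \<le> ennreal (\<mu> powr p / p) * (ennreal (h y powr p) * indicator A y)
                + ennreal (\<mu> powr (-q) / q) * indicator A y"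
      by (cases "y \<in> A") auto
  qed
  also have "\<dots> = ennreal (\<mu> powr p / p) * (\<integral>\<^sup>+ y. ennreal (h y powr p) * indicator A y \<partial>lebesgue)
                + ennreal (\<mu> powr (-q) / q) * emeasure lebesgue A"
    using A h by (simp add: nn_integral_add nn_integral_cmult)
  also have "\<dots> \<le> ennreal (\<mu> powr p / p) * ennreal a + ennreal (\<mu> powr (-q) / q) * ennreal m"
    using a m by (intro add_mono mult_left_mono) auto
  also have "\<dots> = ennreal (\<mu> powr p * a / p + \<mu> powr (-q) * m / q)"
  proof -
    have n1: "0 \<le> \<mu> powr p / p * a" and n2: "0 \<le> \<mu> powr (-q) / q * m"
      using c1 c2 a m by (intro mult_nonneg_nonneg; simp)+
    have "ennreal (\<mu> powr p / p) * ennreal a + ennreal (\<mu> powr (-q) / q) * ennreal m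
       = ennreal (\<mu> powr p / p * a + \<mu> powr (-q) / q * m)"
      by (simp only: ennreal_plus[OF n1 n2] ennreal_mult[OF c1 a(2)] ennreal_mult[OF c2 m(2)])
    also have "\<mu> powr p / p * a + \<mu> powr (-q) / q * m = \<mu> powr p * a / p + \<mu> powr (-q) * m / q"
      by simp
    finally show ?thesis .
  qed
  finally show "(\<integral>\<^sup>+ y. ennreal (h y) * indicator A y \<partial>lebesgue) \<le> ennreal (\<mu> powr p * a / p + \<mu> powr (-q) * m / q)" .
qed

locale adams =
  fixes g :: "'a::euclidean_space \<Rightarrow> real" and \<Omega> :: "'a set" and \<rho> \<alpha> \<beta> :: real
  assumes g_meas[measurable]: "g \<in> borel_measurable lebesgue"
    and g_nonneg: "\<And>y. 0 \<le> g y"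
    and g_supp: "\<And>y. g y \<noteq> 0 \<Longrightarrow> y \<in> \<Omega>"
    and diam: "\<And>x y. x \<in> \<Omega> \<Longrightarrow> y \<in> \<Omega> \<Longrightarrow> dist x y \<le> \<rho>"
    and rho: "\<rho> > 0"
    and alpha: "0 < \<alpha>" "\<alpha> < real DIM('a)"
    and beta: "\<beta> > 0"
    and g_norm: "(\<integral>\<^sup>+ y. ennreal (g y powr (real DIM('a) / \<alpha>)) \<partial>lebesgue) \<le> 1"
begin

definition "p = real DIM('a) / \<alpha>"
definition "q = real DIM('a) / (real DIM('a) - \<alpha>)"

lemma Npos: "real DIM('a) > 0" by simp

lemma pq: "p > 1" "q > 1" "1/p + 1/q = 1"
proof -
  show "p > 1" using alpha by (simp add: p_def less_divide_eq)
  show "q > 1" using alpha by (simp add: q_def less_divide_eq)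
  have "1/p + 1/q = \<alpha> / real DIM('a) + (real DIM('a) - \<alpha>) / real DIM('a)"
    by (simp add: p_def q_def)
  also have "\<dots> = 1" using Npos by (simp add: add_divide_distrib[symmetric])
  finally show "1/p + 1/q = 1" .
qed

lemma Nq: "real DIM('a) / q = real DIM('a) - \<alpha>"
  using alpha by (simp add: q_def)

definition "\<nu> = density lebesgue (\<lambda>y. ennreal (g y powr p))"

lemma sets_nu[simp]: "sets \<nu> = sets lebesgue"
  by (simp add: \<nu>_def)

lemma emeasure_nu: "A \<in> sets lebesgue \<Longrightarrow> emeasure \<nu> A = (\<integral>\<^sup>+ y. ennreal (g y powr p) * indicator A y \<partial>lebesgue)"
  unfolding \<nu>_def by (subst emeasure_density) (auto simp: mult.commute)

lemma nu_le1: "emeasure \<nu> A \<le> 1"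
proof -
  have "emeasure \<nu> A \<le> emeasure \<nu> (space \<nu>)" by (rule emeasure_space)
  also have "\<dots> = (\<integral>\<^sup>+ y. ennreal (g y powr p) \<partial>lebesgue)"
    using emeasure_nu[of UNIV] by (simp add: \<nu>_def)
  also have "\<dots> \<le> 1" using g_norm by (simp add: p_def)
  finally show ?thesis .
qed

lemma nu_finite: "finite_measure \<nu>"
proof
  have "emeasure \<nu> (space \<nu>) < top" using nu_le1[of "space \<nu>"] by (rule le_less_trans) simp
  then show "emeasure \<nu> (space \<nu>) \<noteq> \<infinity>" by simp
qed

interpretation nu: finite_measure \<nu> by (rule nu_finite)

lemma measure_nu_le1: "measure \<nu> A \<le> 1"
  using nu_le1[of A] by (simp add: measure_def enn2real_leI)

definition "F x y = ennreal (g y / norm (x - y) powr (real DIM('a) - \<alpha>))"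

lemma F_meas[measurable]: "F x \<in> borel_measurable lebesgue"
proof -
  have "(\<lambda>y. norm (x - y) powr (real DIM('a) - \<alpha>)) \<in> borel_measurable lborel" by measurable
  then have [measurable]: "(\<lambda>y. norm (x - y) powr (real DIM('a) - \<alpha>)) \<in> borel_measurable lebesgue"
    by (rule measurable_completion)
  show ?thesis unfolding F_def
    by (intro measurable_compose[OF _ measurable_ennreal] borel_measurable_divide g_meas) fact
qed

definition "Ann x j = cball x (\<rho> / 2^j) - cball x (\<rho> / 2^Suc j)"

lemma Ann_sets[measurable]: "Ann x j \<in> sets lebesgue"
  unfolding Ann_def by (intro sets.Diff fmeasurableD lmeasurable_cball)

lemma mem_Ann: "y \<in> Ann x j \<longleftrightarrow> \<rho> / 2^Suc j < dist x y \<and> dist x y \<le> \<rho> / 2^j"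
  by (auto simp: Ann_def)

lemma Ann_disj: "disjoint_family (Ann x)"
  unfolding disjoint_family_on_def
proof (intro ballI impI)
  fix j k :: nat assume "j \<noteq> k"
  have *: "Ann x j \<inter> Ann x k = {}" if "j < k" for j k
  proof -
    have "\<rho> / 2^k \<le> \<rho> / 2^Suc j"
      using rho that by (intro divide_left_mono power_increasing) auto
    then show ?thesis by (auto simp: mem_Ann)
  qed
  show "Ann x j \<inter> Ann x k = {}"
    using *[of j k] *[of k j] \<open>j \<noteq> k\<close> by (cases "j < k") (auto simp: Int_commute)
qed

definition "V = measure lborel (ball (0::'a) 1)"

lemma emeasure_ball: "r \<ge> 0 \<Longrightarrow> emeasure lebesgue (ball (c::'a) r) = ennreal (r ^ DIM('a) * V)"
proof -
  assume r: "r \<ge> 0"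
  have "ennreal (measure lborel (ball c r)) = emeasure lebesgue (ball c r)"
    using emeasure_lborel_ball_finite[of c r] by (subst emeasure_eq_ennreal_measure) auto
  then show ?thesis using content_ball_conv_unit_ball[OF r, of c] by (simp add: V_def)
qed

lemma V_nonneg: "V \<ge> 0" by (simp add: V_def)

definition "C1 = V powr (1/q) * 4 powr (real DIM('a) - \<alpha>)"

lemma C1_nonneg: "C1 \<ge> 0" by (simp add: C1_def)

lemma T_bound:
  "(\<integral>\<^sup>+ y. F x y * indicator (Ann x j) y \<partial>lebesgue) \<le> ennreal (C1 * measure \<nu> (Ann x j) powr (1/p))"
proof -
  define e where "e = real DIM('a) - \<alpha>"
  have e: "e > 0" using alpha by (simp add: e_def)
  define r0 where "r0 = \<rho> / 2^Suc j"
  have r0: "r0 > 0" using rho by (simp add: r0_def)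
  define c where "c = 1 / r0 powr e"
  have c: "c > 0" using r0 by (simp add: c_def)
  define a where "a = measure \<nu> (Ann x j)"
  have a: "a \<ge> 0" by (simp add: a_def)
  define r where "r = 4 * r0"
  define m where "m = r ^ DIM('a) * V"
  have m: "m \<ge> 0" using r0 V_nonneg by (simp add: m_def r_def)
  have S1: "(\<integral>\<^sup>+ y. F x y * indicator (Ann x j) y \<partial>lebesgue)
      \<le> (\<integral>\<^sup>+ y. ennreal c * (ennreal (g y) * indicator (Ann x j) y) \<partial>lebesgue)"
  proof (rule nn_integral_mono)
    fix y
    show "F x y * indicator (Ann x j) y \<le> ennreal c * (ennreal (g y) * indicator (Ann x j) y)"
    proof (cases "y \<in> Ann x j")
      case True
      then have "r0 < norm (x - y)" by (simp add: mem_Ann r0_def dist_norm)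
      then have "r0 powr e \<le> norm (x - y) powr e" using r0 e by (intro powr_mono2) auto
      then have "g y / norm (x - y) powr e \<le> g y / r0 powr e"
      proof -
        have "0 < r0 powr e" "0 < norm (x - y) powr e" using r0 \<open>r0 < norm (x - y)\<close> by auto
        then show ?thesis using g_nonneg[of y] \<open>r0 powr e \<le> norm (x - y) powr e\<close>
          by (intro divide_left_mono) auto
      qed
      also have "\<dots> = c * g y" by (simp add: c_def)
      finally have "F x y \<le> ennreal (c * g y)" unfolding F_def e_def by (rule ennreal_leI)
      also have "\<dots> = ennreal c * ennreal (g y)" using c g_nonneg[of y] by (simp add: ennreal_mult)
      finally show ?thesis using True by simp
    qed simp
  qed
  have S2: "(\<integral>\<^sup>+ y. ennreal c * (ennreal (g y) * indicator (Ann x j) y) \<partial>lebesgue) = ennreal c * (\<integral>\<^sup>+ y. ennreal (g y) * indicator (Ann x j) y \<partial>lebesgue)"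
    by (rule nn_integral_cmult) measurable
  have S3: "(\<integral>\<^sup>+ y. ennreal (g y) * indicator (Ann x j) y \<partial>lebesgue) \<le> ennreal (a powr (1/p) * m powr (1/q))"
  proof (rule holder_set[OF pq g_meas g_nonneg Ann_sets _ a _ m])
    show "(\<integral>\<^sup>+ y. ennreal (g y powr p) * indicator (Ann x j) y \<partial>lebesgue) = ennreal a"
      unfolding a_def using nu.emeasure_eq_measure[of "Ann x j"] emeasure_nu[OF Ann_sets] by simp
    have "Ann x j \<subseteq> ball x r"
      using r0 by (auto simp: Ann_def r_def r0_def dist_norm)
    then have "emeasure lebesgue (Ann x j) \<le> emeasure lebesgue (ball x r)"
      by (intro emeasure_mono) auto
    also have "\<dots> = ennreal m" using r0 emeasure_ball[of r x] by (simp add: m_def r_def)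
    finally show "emeasure lebesgue (Ann x j) \<le> ennreal m" .
  qed
  have S4: "ennreal c * (\<integral>\<^sup>+ y. ennreal (g y) * indicator (Ann x j) y \<partial>lebesgue)
      \<le> ennreal c * ennreal (a powr (1/p) * m powr (1/q))" using S3 by (rule mult_left_mono) simp
  have eqC: "c * m powr (1/q) = C1"
  proof -
    have "m powr (1/q) = (r powr real DIM('a)) powr (1/q) * V powr (1/q)"
      using r0 V_nonneg by (simp add: m_def r_def powr_mult powr_realpow)
    also have "(r powr real DIM('a)) powr (1/q) = r powr e"
      using Nq by (simp add: powr_powr e_def)
    also have "r powr e = 4 powr e * r0 powr e" using r0 by (simp add: r_def powr_mult)
    finally show ?thesis using r0 by (simp add: c_def C1_def e_def)
  qed
  have S5: "ennreal c * ennreal (a powr (1/p) * m powr (1/q)) = ennreal (C1 * a powr (1/p))"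
  proof -
    have E: "c * (a powr (1/p) * m powr (1/q)) = C1 * a powr (1/p)"
      using eqC by (metis mult.assoc mult.commute)
    have "ennreal c * ennreal (a powr (1/p) * m powr (1/q)) = ennreal (c * (a powr (1/p) * m powr (1/q)))"
      by (rule ennreal_mult[symmetric]) (use c in auto)
    then show ?thesis by (simp only: E)
  qed
  have "(\<integral>\<^sup>+ y. F x y * indicator (Ann x j) y \<partial>lebesgue) \<le> ennreal (C1 * a powr (1/p))"
    using S1 S4 S5 unfolding S2 by simp
  then show ?thesis unfolding a_def .
qed


end

context adams begin

interpretation nu: finite_measure \<nu> by (rule nu_finite)
lemma decomp:
  assumes x: "x \<in> \<Omega>"
  shows "(\<integral>\<^sup>+ y. F x y \<partial>lebesgue) \<le> (\<Sum>j. \<integral>\<^sup>+ y. F x y * indicator (Ann x j) y \<partial>lebesgue)"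
proof -
  have "(\<integral>\<^sup>+ y. F x y \<partial>lebesgue) \<le> (\<integral>\<^sup>+ y. (\<Sum>j. F x y * indicator (Ann x j) y) \<partial>lebesgue)"
  proof (rule nn_integral_mono)
    fix y
    show "F x y \<le> (\<Sum>j. F x y * indicator (Ann x j) y)"
    proof (cases "F x y = 0")
      case True then show ?thesis by simp
    next
      case False
      then have gy: "g y \<noteq> 0" by (auto simp: F_def)
      then have y: "y \<in> \<Omega>" by (rule g_supp)
      have dxy: "dist x y \<le> \<rho>" using diam[OF x y] .
      have "x \<noteq> y" using False by (auto simp: F_def)
      then have d: "dist x y > 0" by simp
      obtain n :: nat where n: "\<rho> / dist x y < 2^n" using real_arch_pow[of 2 "\<rho> / dist x y"] by auto
      then have ex: "\<exists>n::nat. \<rho> / 2^n < dist x y" using d by (auto simp: field_simps)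
      define j0 where "j0 = (LEAST n::nat. \<rho> / 2^n < dist x y)"
      have j0: "\<rho> / 2^j0 < dist x y" unfolding j0_def by (rule LeastI_ex[OF ex])
      have "j0 \<noteq> 0"
      proof
        assume "j0 = 0" then show False using j0 dxy by simp
      qed
      then obtain j where j: "j0 = Suc j" by (cases j0) auto
      have "\<not> (\<rho> / 2^j < dist x y)" using not_less_Least[of j "\<lambda>n. \<rho> / 2^n < dist x y"] j0_def j by auto
      then have "y \<in> Ann x j" using j0 j by (auto simp: mem_Ann)
      then have "F x y = (\<Sum>i\<in>{j}. F x y * indicator (Ann x i) y)" by simp
      also have "\<dots> \<le> (\<Sum>i. F x y * indicator (Ann x i) y)"
        by (rule sum_le_suminf) auto
      finally show ?thesis .
    qed
  qed
  also have "\<dots> = (\<Sum>j. \<integral>\<^sup>+ y. F x y * indicator (Ann x j) y \<partial>lebesgue)"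
    by (rule nn_integral_suminf) measurable
  finally show ?thesis .
qed

definition "\<theta> = (1/2) powr (\<beta> / p)"

lemma theta: "0 < \<theta>" "\<theta> < 1"
  using beta pq by (auto simp: \<theta>_def powr01_less_one)

lemma sum_Ann_le1: "(\<Sum>j<K. measure \<nu> (Ann x j)) \<le> 1"
proof -
  have "(\<Sum>j<K. measure \<nu> (Ann x j)) = measure \<nu> (\<Union>j\<in>{..<K}. Ann x j)"
    by (rule nu.finite_measure_finite_Union[symmetric])
       (auto intro: disjoint_family_on_mono[OF _ Ann_disj])
  also have "\<dots> \<le> 1" by (rule measure_nu_le1)
  finally show ?thesis .
qed

lemma good_bound:
  assumes x: "x \<in> \<Omega>" and good: "\<And>j. n0 \<le> j \<Longrightarrow> measure \<nu> (Ann x j) \<le> (\<theta>^(j-n0)) powr p"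
  shows "(\<integral>\<^sup>+ y. F x y \<partial>lebesgue) \<le> ennreal (C1 * (real n0 powr (1/q) + 1/(1-\<theta>)))"
proof -
  define T where "T j = (\<integral>\<^sup>+ y. F x y * indicator (Ann x j) y \<partial>lebesgue)" for j
  define a where "a j = measure \<nu> (Ann x j)" for j
  have a: "a j \<ge> 0" for j by (simp add: a_def)
  have TB: "T j \<le> ennreal (C1 * a j powr (1/p))" for j unfolding T_def a_def by (rule T_bound)
  have "(\<integral>\<^sup>+ y. F x y \<partial>lebesgue) \<le> (\<Sum>j. T j)" unfolding T_def by (rule decomp[OF x])
  also have "\<dots> = (\<Sum>i. T (i + n0)) + (\<Sum>j<n0. T j)" by (rule suminf_offset) simp
  also have "(\<Sum>j<n0. T j) \<le> ennreal (C1 * real n0 powr (1/q))"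
  proof -
    have "(\<Sum>j<n0. T j) \<le> (\<Sum>j<n0. ennreal (C1 * a j powr (1/p)))" by (rule sum_mono) (rule TB)
    also have "\<dots> = ennreal (\<Sum>j<n0. C1 * a j powr (1/p))"
      using C1_nonneg by (intro sum_ennreal) auto
    also have "(\<Sum>j<n0. C1 * a j powr (1/p)) = C1 * (\<Sum>j<n0. a j powr (1/p))"
      by (simp add: sum_distrib_left)
    also have "\<dots> \<le> C1 * real n0 powr (1/q)"
      using discrete_holder[OF pq, of a n0] a sum_Ann_le1[of x n0] C1_nonneg
      by (intro mult_left_mono) (auto simp: a_def)
    finally show ?thesis by (simp add: ennreal_leI order_trans)
  qed
  also have "(\<Sum>i. T (i + n0)) \<le> ennreal (C1 / (1 - \<theta>))"
  proof -
    have "T (i + n0) \<le> ennreal (C1 * \<theta>^i)" for i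
    proof -
      have "a (i + n0) powr (1/p) \<le> ((\<theta>^i) powr p) powr (1/p)"
        using good[of "i+n0"] pq a by (intro powr_mono2) (auto simp: a_def)
      also have "\<dots> = \<theta>^i" using pq theta by (simp add: powr_powr)
      finally have "C1 * a (i + n0) powr (1/p) \<le> C1 * \<theta>^i"
        using C1_nonneg by (intro mult_left_mono)
      then show ?thesis using TB[of "i+n0"] by (meson ennreal_leI order_trans)
    qed
    then have "(\<Sum>i. T (i + n0)) \<le> (\<Sum>i. ennreal (C1 * \<theta>^i))"
      by (intro suminf_le) auto
    also have "\<dots> = ennreal (\<Sum>i. C1 * \<theta>^i)"
      using theta C1_nonneg by (intro suminf_ennreal2) (auto intro: summable_mult summable_geometric)
    also have "(\<Sum>i. C1 * \<theta>^i) = C1 / (1 - \<theta>)"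
      using theta by (simp add: suminf_mult suminf_geometric summable_geometric divide_simps)
    finally show ?thesis .
  qed
  finally have "(\<integral>\<^sup>+ y. F x y \<partial>lebesgue) \<le> ennreal (C1 / (1 - \<theta>)) + ennreal (C1 * real n0 powr (1/q))"
    by (simp add: add_mono)
  also have "\<dots> = ennreal (C1 * (real n0 powr (1/q) + 1/(1-\<theta>)))"
    using C1_nonneg theta by (simp add: ennreal_plus[symmetric] del: ennreal_plus) (simp add: algebra_simps)
  finally show ?thesis .
qed

end

context adams begin

interpretation nu: finite_measure \<nu> by (rule nu_finite)

definition "rK n = 4 * (\<rho> / 2^Suc n)"

lemma rK_pos: "rK n > 0" using rho by (simp add: rK_def)

lemma Ann_sub_ball: "Ann x j \<subseteq> ball x (rK j)"
  using rho by (auto simp: Ann_def rK_def dist_norm)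

definition "Bad n = {x. \<exists>r. 0 < r \<and> r \<le> rK n \<and> emeasure \<nu> (ball x r) > ennreal ((r / rK n) powr \<beta>)}"

lemma good_of_notbad:
  assumes nb: "x \<notin> Bad n" and j: "n \<le> j"
  shows "measure \<nu> (Ann x j) \<le> (\<theta>^(j-n)) powr p"
proof -
  have rj: "rK j \<le> rK n" using rho j by (simp add: rK_def divide_left_mono power_increasing)
  have "\<not> emeasure \<nu> (ball x (rK j)) > ennreal ((rK j / rK n) powr \<beta>)"
    using nb rj rK_pos[of j] by (auto simp: Bad_def)
  then have "emeasure \<nu> (ball x (rK j)) \<le> ennreal ((rK j / rK n) powr \<beta>)" by simp
  then have B: "measure \<nu> (ball x (rK j)) \<le> (rK j / rK n) powr \<beta>"
    using nu.emeasure_eq_measure[of "ball x (rK j)"] by simp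
  have "measure \<nu> (Ann x j) \<le> measure \<nu> (ball x (rK j))"
    using Ann_sub_ball by (intro nu.finite_measure_mono) auto
  moreover have E1: "rK j / rK n = (1/2) ^ (j - n)"
  proof -
    have "(2::real)^j = 2^n * 2^(j-n)" using j by (simp add: power_add[symmetric])
    then show ?thesis using rho by (simp add: rK_def power_one_over field_simps)
  qed
  moreover have E2: "((1/2::real) ^ (j - n)) powr \<beta> = (\<theta>^(j-n)) powr p"
  proof -
    have "((1/2::real) ^ (j - n)) powr \<beta> = (1/2) powr (real (j-n) * \<beta>)"
      by (simp add: powr_realpow[symmetric] powr_powr)
    moreover have "(\<theta>^(j-n)) powr p = (1/2) powr (\<beta> / p * real (j-n) * p)"
      unfolding \<theta>_def by (simp add: powr_realpow[symmetric] powr_powr)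
    moreover have "\<beta> / p * real (j-n) * p = real (j-n) * \<beta>" using pq by simp
    ultimately show ?thesis by simp
  qed
  ultimately show ?thesis using B by simp
qed

lemma bad_H: "hausdorff_content \<beta> (Bad n) \<le> ennreal (omega_const \<beta> * 5 powr \<beta> * rK n powr \<beta>)"
proof -
  define r where "r x = (SOME r. 0 < r \<and> r \<le> rK n \<and> emeasure \<nu> (ball x r) > ennreal ((r / rK n) powr \<beta>))" for x
  have r: "0 < r x \<and> r x \<le> rK n \<and> emeasure \<nu> (ball x (r x)) > ennreal ((r x / rK n) powr \<beta>)" if "x \<in> Bad n" for x
    unfolding r_def by (rule someI_ex) (use that in \<open>simp add: Bad_def\<close>)
  have cov: "Bad n \<subseteq> (\<Union>x\<in>Bad n. ball x (r x))" using r by force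
  obtain C where C: "countable C" "C \<subseteq> Bad n"
    and pw: "pairwise (\<lambda>i j. disjnt (ball i (r i)) (ball j (r j))) C"
    and cov5: "Bad n \<subseteq> (\<Union>x\<in>C. ball x (5 * r x))"
    using Vitali_covering_lemma_balls[where S="Bad n" and K="Bad n" and a="\<lambda>x. x" and r=r and B="rK n"] cov r by auto
  define w where "w = omega_const \<beta> * 5 powr \<beta> * rK n powr \<beta>"
  have w: "w \<ge> 0" using omega_pos[OF beta] by (simp add: w_def)
  have UN: "(\<integral>\<^sup>+ x. emeasure \<nu> (ball x (r x)) \<partial>count_space C) = emeasure \<nu> (\<Union>x\<in>C. ball x (r x))"
  proof (rule emeasure_UN_countable[symmetric])
    show "disjoint_family_on (\<lambda>x. ball x (r x)) C"
      using pw unfolding disjoint_family_on_def pairwise_def disjnt_def by blast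
  qed (use C in auto)
  have "hausdorff_content \<beta> (Bad n) \<le> (\<integral>\<^sup>+ x. ennreal (omega_const \<beta> * (5 * r x) powr \<beta>) \<partial>count_space C)"
    by (rule hc_le_countable[OF C(1) _ beta cov5]) (use r C in auto)
  also have "\<dots> \<le> (\<integral>\<^sup>+ x. ennreal w * emeasure \<nu> (ball x (r x)) \<partial>count_space C)"
  proof (rule nn_integral_mono)
    fix x assume "x \<in> space (count_space C)"
    then have x: "x \<in> Bad n" using C by auto
    have "omega_const \<beta> * (5 * r x) powr \<beta> = w * (r x / rK n) powr \<beta>"
      using r[OF x] rK_pos[of n] by (simp add: w_def powr_mult powr_divide)
    then have "ennreal (omega_const \<beta> * (5 * r x) powr \<beta>) = ennreal w * ennreal ((r x / rK n) powr \<beta>)"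
      using w by (simp add: ennreal_mult)
    also have "\<dots> \<le> ennreal w * emeasure \<nu> (ball x (r x))"
      using r[OF x] by (intro mult_left_mono) auto
    finally show "ennreal (omega_const \<beta> * (5 * r x) powr \<beta>) \<le> ennreal w * emeasure \<nu> (ball x (r x))" .
  qed
  also have "\<dots> = ennreal w * (\<integral>\<^sup>+ x. emeasure \<nu> (ball x (r x)) \<partial>count_space C)"
    by (rule nn_integral_cmult) simp
  also have "\<dots> = ennreal w * emeasure \<nu> (\<Union>x\<in>C. ball x (r x))"
    using UN by simp
  also have "ennreal w * emeasure \<nu> (\<Union>x\<in>C. ball x (r x)) \<le> ennreal w * 1"
    by (intro mult_left_mono nu_le1) simp
  finally show ?thesis by (simp add: w_def)
qed


lemma level_bound:
  fixes u :: "'a \<Rightarrow> real"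
  assumes u: "\<And>x. x \<in> \<Omega> \<Longrightarrow> ennreal \<bar>u x\<bar> \<le> ennreal k * (\<integral>\<^sup>+ y. F x y \<partial>lebesgue)" and k: "k \<ge> 0"
  shows "hausdorff_content \<beta> {x\<in>\<Omega>. \<bar>u x\<bar> > k * (C1 * (real n powr (1/q) + 1/(1-\<theta>)))}
           \<le> ennreal (omega_const \<beta> * 5 powr \<beta> * rK n powr \<beta>)"
proof -
  have "{x\<in>\<Omega>. \<bar>u x\<bar> > k * (C1 * (real n powr (1/q) + 1/(1-\<theta>)))} \<subseteq> Bad n"
  proof (rule subsetI, rule ccontr)
    fix x assume x: "x \<in> {x\<in>\<Omega>. \<bar>u x\<bar> > k * (C1 * (real n powr (1/q) + 1/(1-\<theta>)))}" and nb: "x \<notin> Bad n"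
    have xO: "x \<in> \<Omega>" using x by simp
    have G: "(\<integral>\<^sup>+ y. F x y \<partial>lebesgue) \<le> ennreal (C1 * (real n powr (1/q) + 1/(1-\<theta>)))"
      by (rule good_bound[OF xO good_of_notbad[OF nb]])
    have X: "0 \<le> C1 * (real n powr (1/q) + 1/(1-\<theta>))"
      using C1_nonneg theta by (intro mult_nonneg_nonneg add_nonneg_nonneg) auto
    have "ennreal \<bar>u x\<bar> \<le> ennreal k * ennreal (C1 * (real n powr (1/q) + 1/(1-\<theta>)))"
      by (rule order_trans[OF u[OF xO] mult_left_mono[OF G]]) simp
    also have "\<dots> = ennreal (k * (C1 * (real n powr (1/q) + 1/(1-\<theta>))))"
      by (rule ennreal_mult[symmetric, OF k X])
    finally have "\<bar>u x\<bar> \<le> k * (C1 * (real n powr (1/q) + 1/(1-\<theta>)))"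
      using k X by (subst (asm) ennreal_le_iff) (auto intro!: mult_nonneg_nonneg)
    then show False using x by simp
  qed
  then show ?thesis by (rule order_trans[OF hc_mono bad_H])
qed

end

lemma choquet_final:
  fixes u :: "'a::euclidean_space \<Rightarrow> real" and \<Omega> :: "'a set"
  assumes A: "A > 0" and q: "q > 0" and beta: "\<beta> > 0" and D: "D \<ge> 0" and H0: "H0 \<ge> 0"
    and lev: "\<And>n::nat. hausdorff_content \<beta> {x\<in>\<Omega>. \<bar>u x\<bar> > A * real (Suc n) powr (1/q)}
                 \<le> ennreal (D * 2 powr (- \<beta> * real n))"
    and tot: "hausdorff_content \<beta> \<Omega> \<le> ennreal H0"
  shows "choquet_integral \<beta> \<Omega> (\<lambda>x. exp ((\<beta> * ln 2 / 2) / A powr q * \<bar>u x\<bar> powr q))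
     \<le> ennreal (H0 * exp (\<beta> * ln 2 / 2) + D * 2 powr (2 * \<beta>) * exp (\<beta> * ln 2 / 2) powr (-1) + 1)"
proof -
  define \<kappa> where "\<kappa> = \<beta> * ln 2 / 2"
  have kappa: "\<kappa> > 0" using beta by (simp add: \<kappa>_def)
  define c' where "c' = \<kappa> / A powr q"
  have c': "c' > 0" using kappa A by (simp add: c'_def)
  define T1 where "T1 = exp \<kappa>"
  have T1: "T1 > 1" using kappa by (simp add: T1_def)
  define D2 where "D2 = D * 2 powr (2 * \<beta>)"
  have D2: "D2 \<ge> 0" using D by (simp add: D2_def)
  define S where "S t = {x\<in>\<Omega>. exp (c' * \<bar>u x\<bar> powr q) > t}" for t
  have C1: "hausdorff_content \<beta> (S t) \<le> ennreal (D2 * t powr (-2))" if t: "t \<ge> T1" for t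
  proof -
    have tpos: "t > 0" using t T1 by simp
    define v where "v = ln t / \<kappa>"
    have "ln t \<ge> \<kappa>" using t tpos by (simp add: T1_def ln_ge_iff)
    then have v1: "v \<ge> 1" using kappa by (simp add: v_def)
    define n where "n = nat \<lfloor>v\<rfloor> - 1"
    have fl: "\<lfloor>v\<rfloor> \<ge> 1" using v1 by simp
    have sn: "real (Suc n) = of_int \<lfloor>v\<rfloor>" using fl by (simp add: n_def)
    have snv: "real (Suc n) \<le> v" using sn by simp
    have nv: "real n \<ge> v - 2" using sn by linarith
    have sub: "S t \<subseteq> {x\<in>\<Omega>. \<bar>u x\<bar> > A * real (Suc n) powr (1/q)}"
    proof
      fix x assume x: "x \<in> S t"
      then have "t < exp (c' * \<bar>u x\<bar> powr q)" by (simp add: S_def)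
      then have "ln t < c' * \<bar>u x\<bar> powr q" using tpos by (metis ln_exp ln_less_cancel_iff exp_gt_zero)
      then have "ln t / c' < \<bar>u x\<bar> powr q" using c' by (simp add: divide_less_eq mult.commute)
      moreover have "ln t / c' = v * A powr q" using kappa A by (simp add: c'_def v_def)
      moreover have "real (Suc n) * A powr q \<le> v * A powr q" using snv A by (intro mult_right_mono) auto
      ultimately have lt: "real (Suc n) * A powr q < \<bar>u x\<bar> powr q" by linarith
      have "(real (Suc n) * A powr q) powr (1/q) < (\<bar>u x\<bar> powr q) powr (1/q)"
        using lt q A by (intro powr_less_mono2) auto
      moreover have "(\<bar>u x\<bar> powr q) powr (1/q) = \<bar>u x\<bar>" using q by (simp add: powr_powr)
      moreover have "(real (Suc n) * A powr q) powr (1/q) = A * real (Suc n) powr (1/q)"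
        using q A by (simp add: powr_mult powr_powr)
      ultimately show "x \<in> {x\<in>\<Omega>. \<bar>u x\<bar> > A * real (Suc n) powr (1/q)}" using x by (simp add: S_def)
    qed
    have e1: "2 powr (- \<beta> * real n) \<le> 2 powr (- \<beta> * (v - 2))"
      using nv beta by (intro powr_mono) auto
    have e2: "2 powr (- \<beta> * (v - 2)) = 2 powr (2 * \<beta>) * 2 powr (- \<beta> * v)"
      by (simp add: powr_add[symmetric] algebra_simps)
    have e3: "2 powr (- \<beta> * v) = t powr (-2)"
    proof -
      have "- \<beta> * v * ln 2 = -2 * ln t" using kappa beta by (simp add: v_def \<kappa>_def field_simps)
      then show ?thesis using tpos by (simp add: powr_def)
    qed
    have "hausdorff_content \<beta> (S t) \<le> ennreal (D * 2 powr (- \<beta> * real n))"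
      by (rule order_trans[OF hc_mono[OF sub] lev])
    also have "D * 2 powr (- \<beta> * real n) \<le> D2 * t powr (-2)"
    proof -
      have e4: "2 powr (- \<beta> * real n) \<le> 2 powr (2 * \<beta>) * t powr (-2)" using e1 unfolding e2 e3 .
      have "D * 2 powr (- \<beta> * real n) \<le> D * (2 powr (2 * \<beta>) * t powr (-2))"
        using e4 D by (rule mult_left_mono)
      then show ?thesis by (simp add: D2_def mult.assoc)
    qed
    then have "ennreal (D * 2 powr (- \<beta> * real n)) \<le> ennreal (D2 * t powr (-2))"
      by (rule ennreal_leI)
    finally show ?thesis .
  qed
  have C2: "hausdorff_content \<beta> (S t) \<le> ennreal H0" for t
    by (rule order_trans[OF hc_mono tot]) (auto simp: S_def)
  define C' where "C' = H0 * T1 + D2 * T1 powr (-1) + 1"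
  have C': "C' > 0" using H0 D2 T1 by (simp add: C'_def add_nonneg_pos)
  have "choquet_integral \<beta> \<Omega> (\<lambda>x. exp (c' * \<bar>u x\<bar> powr q))
      = (\<integral>\<^sup>+ t. hausdorff_content \<beta> (S t) * indicator {0..} t \<partial>lborel)"
    by (simp add: choquet_integral_def S_def)
  also have "\<dots> \<le> (\<integral>\<^sup>+ t. ennreal H0 * indicator {0..T1} t + ennreal (D2 * t powr (-2)) * indicator {T1..} t \<partial>lborel)"
  proof (rule nn_integral_mono)
    fix t :: real
    consider "t < 0" | "0 \<le> t" "t \<le> T1" | "T1 < t" by linarith
    then show "hausdorff_content \<beta> (S t) * indicator {0..} t
      \<le> ennreal H0 * indicator {0..T1} t + ennreal (D2 * t powr (-2)) * indicator {T1..} t"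
    proof cases
      case 1 then show ?thesis by simp
    next
      case 2 then show ?thesis using C2[of t] by (simp add: add_increasing2)
    next
      case 3 then show ?thesis using C1[of t] T1 by (simp add: add_increasing)
    qed
  qed
  also have "\<dots> = (\<integral>\<^sup>+ t. ennreal H0 * indicator {0..T1} t \<partial>lborel)
      + (\<integral>\<^sup>+ t. ennreal (D2 * t powr (-2)) * indicator {T1..} t \<partial>lborel)"
    by (rule nn_integral_add) measurable
  also have "(\<integral>\<^sup>+ t. ennreal H0 * indicator {0..T1} t \<partial>lborel) = ennreal H0 * ennreal T1"
    using T1 by (simp add: nn_integral_cmult_indicator)
  also have "(\<integral>\<^sup>+ t. ennreal (D2 * t powr (-2)) * indicator {T1..} t \<partial>lborel) = ennreal (D2 * T1 powr (-1))"
  proof -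
    have "((\<lambda>t. D2 * t powr (-2)) has_integral (D2 * (- (T1 powr (-2 + 1)) / (-2 + 1)))) {T1..}"
      by (intro has_integral_mult_right has_integral_powr_to_inf) (use T1 in auto)
    then have HI: "((\<lambda>t. D2 * t powr (-2)) has_integral (D2 * T1 powr (-1))) {T1..}" by simp
    show ?thesis
      by (rule nn_integral_has_integral_lebesgue'[OF _ HI]) (use D2 T1 in auto)
  qed
  also have "ennreal H0 * ennreal T1 + ennreal (D2 * T1 powr (-1)) \<le> ennreal C'"
    using H0 T1 D2 by (simp add: C'_def ennreal_mult[symmetric] ennreal_plus[symmetric] del: ennreal_plus)
  finally show ?thesis unfolding c'_def C'_def \<kappa>_def T1_def D2_def .
qed

lemma riesz_bound:
  fixes f :: "'a::euclidean_space \<Rightarrow> real"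
  assumes gam: "riesz_gamma DIM('a) \<alpha> > 0"
  shows "ennreal \<bar>riesz_potential_on \<alpha> \<Omega> f x\<bar>
     \<le> ennreal (1 / riesz_gamma DIM('a) \<alpha>) *
        (\<integral>\<^sup>+ y. ennreal ((if y \<in> \<Omega> then \<bar>f y\<bar> else 0) / norm (x - y) powr (real DIM('a) - \<alpha>)) \<partial>lebesgue)"
proof -
  define h where "h = (\<lambda>y. (if y \<in> \<Omega> then f y else 0) / norm (x - y) powr (real DIM('a) - \<alpha>))"
  have nh: "ennreal (norm (h y)) = ennreal ((if y \<in> \<Omega> then \<bar>f y\<bar> else 0) / norm (x - y) powr (real DIM('a) - \<alpha>))" for y
    by (simp add: h_def abs_divide)
  have I: "ennreal \<bar>integral\<^sup>L lebesgue h\<bar> \<le> (\<integral>\<^sup>+ y. ennreal (norm (h y)) \<partial>lebesgue)"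
  proof (cases "integrable lebesgue h")
    case True
    then show ?thesis using integral_norm_bound_ennreal[OF True] by simp
  next
    case False
    then show ?thesis by (simp add: not_integrable_integral_eq)
  qed
  have "riesz_potential_on \<alpha> \<Omega> f x = (1 / riesz_gamma DIM('a) \<alpha>) * integral\<^sup>L lebesgue h"
    by (simp add: riesz_potential_on_def riesz_potential_def h_def)
  then have e: "\<bar>riesz_potential_on \<alpha> \<Omega> f x\<bar> = (1 / riesz_gamma DIM('a) \<alpha>) * \<bar>integral\<^sup>L lebesgue h\<bar>"
    using gam by (simp add: abs_mult)
  have "ennreal \<bar>riesz_potential_on \<alpha> \<Omega> f x\<bar> = ennreal (1 / riesz_gamma DIM('a) \<alpha>) * ennreal \<bar>integral\<^sup>L lebesgue h\<bar>"
    unfolding e by (rule ennreal_mult) (use gam in auto)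
  also have "\<dots> \<le> ennreal (1 / riesz_gamma DIM('a) \<alpha>) * (\<integral>\<^sup>+ y. ennreal (norm (h y)) \<partial>lebesgue)"
    by (rule mult_left_mono[OF I]) simp
  finally show ?thesis unfolding nh .
qed

theorem corollary1p4:
  fixes \<Omega> :: "'a::euclidean_space set" and \<alpha> \<beta> :: real
  assumes "open \<Omega>" and "bounded \<Omega>"
    and "0 < \<alpha>" and "\<alpha> < real DIM('a)"
    and "0 < \<beta>" and "\<beta> \<le> real DIM('a)"
  shows "\<exists>c' C'. c' > 0 \<and> C' > 0 \<and>
    (\<forall>f :: 'a \<Rightarrow> real.
       f \<in> borel_measurable (lebesgue_on \<Omega>) \<and>
       (\<integral>\<^sup>+ x \<in> \<Omega>. ennreal (\<bar>f x\<bar> powr (real DIM('a) / \<alpha>)) \<partial>lebesgue) \<le> 1 \<longrightarrow>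
       choquet_integral \<beta> \<Omega>
         (\<lambda>x. exp (c' * \<bar>riesz_potential_on \<alpha> \<Omega> f x\<bar> powr (real DIM('a) / (real DIM('a) - \<alpha>))))
       \<le> ennreal C')"
proof -
  have alpha: "0 < \<alpha>" "\<alpha> < real DIM('a)" and beta: "0 < \<beta>" using assms by auto
  obtain R where R: "0 < R" "\<Omega> \<subseteq> ball 0 R" using bounded_subset_ballD[OF assms(2)] by blast
  define \<rho> where "\<rho> = 2 * R"
  have rho: "\<rho> > 0" using R by (simp add: \<rho>_def)
  have diam: "dist x y \<le> \<rho>" if "x \<in> \<Omega>" "y \<in> \<Omega>" for x y
  proof -
    have "norm x < R" "norm y < R" using that R by (auto simp: subset_iff)
    moreover have "dist x y \<le> norm x + norm y" by (simp add: dist_norm norm_triangle_ineq4)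
    ultimately show ?thesis by (simp add: \<rho>_def)
  qed
  have Osets: "\<Omega> \<in> sets lebesgue" using lmeasurable_open[OF assms(2) assms(1)] by (rule fmeasurableD)
  define \<gamma> where "\<gamma> = riesz_gamma DIM('a) \<alpha>"
  have gam: "\<gamma> > 0" using alpha by (simp add: \<gamma>_def riesz_gamma_def)
  define p where "p = real DIM('a) / \<alpha>"
  define q where "q = real DIM('a) / (real DIM('a) - \<alpha>)"
  have q: "q > 0" using alpha by (simp add: q_def)
  define V where "V = measure lborel (ball (0::'a) 1)"
  define C1v where "C1v = V powr (1 / q) * 4 powr (real DIM('a) - \<alpha>)"
  have C1v: "C1v \<ge> 0" by (simp add: C1v_def)
  define \<theta>v where "\<theta>v = (1/2::real) powr (\<beta> / p)"
  have thv: "0 < \<theta>v" "\<theta>v < 1" using beta alpha by (auto simp: \<theta>v_def p_def powr01_less_one)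
  define A where "A = (1 / \<gamma>) * (C1v + 1) * (1 + 1 / (1 - \<theta>v))"
  have A: "A > 0" using gam C1v thv by (simp add: A_def add_pos_nonneg)
  define D where "D = omega_const \<beta> * 5 powr \<beta> * (2 * \<rho>) powr \<beta>"
  have D: "D \<ge> 0" using omega_pos[OF beta] by (simp add: D_def)
  define H0 where "H0 = omega_const \<beta> * R powr \<beta>"
  have H0: "H0 \<ge> 0" using omega_pos[OF beta] by (simp add: H0_def)
  have tot: "hausdorff_content \<beta> \<Omega> \<le> ennreal H0"
  proof -
    have "hausdorff_content \<beta> \<Omega> \<le> (\<integral>\<^sup>+ i. ennreal (omega_const \<beta> * (\<lambda>_. R) i powr \<beta>) \<partial>count_space {0::nat})"
      by (rule hc_le_countable[where c="\<lambda>_. 0"]) (use R beta in auto)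
    then show ?thesis by (simp add: H0_def)
  qed
  define c' where "c' = (\<beta> * ln 2 / 2) / A powr q"
  define C' where "C' = H0 * exp (\<beta> * ln 2 / 2) + D * 2 powr (2 * \<beta>) * exp (\<beta> * ln 2 / 2) powr (-1) + 1"
  have c': "c' > 0" using beta A by (simp add: c'_def)
  have C': "C' > 0" using H0 D by (simp add: C'_def add_nonneg_pos)
  show ?thesis
  proof (intro exI conjI allI impI)
    show "c' > 0" "C' > 0" by (fact c', fact C')
    fix f :: "'a \<Rightarrow> real"
    assume f: "f \<in> borel_measurable (lebesgue_on \<Omega>) \<and>
       (\<integral>\<^sup>+ x \<in> \<Omega>. ennreal (\<bar>f x\<bar> powr (real DIM('a) / \<alpha>)) \<partial>lebesgue) \<le> 1"
    define g where "g y = (if y \<in> \<Omega> then \<bar>f y\<bar> else 0)" for y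
    have gm: "g \<in> borel_measurable lebesgue"
    proof -
      have fm: "f \<in> borel_measurable (lebesgue_on \<Omega>)" using f by simp
      have "(\<lambda>x. \<bar>f x\<bar>) \<in> borel_measurable (lebesgue_on \<Omega>)" using fm by measurable
      moreover have geq: "g = (\<lambda>x. if x \<in> \<Omega> then \<bar>f x\<bar> else 0)" by (simp add: g_def fun_eq_iff)
      ultimately show ?thesis using borel_measurable_if_I[OF _ Osets] by simp
    qed
    have gn: "(\<integral>\<^sup>+ y. ennreal (g y powr (real DIM('a) / \<alpha>)) \<partial>lebesgue) \<le> 1"
    proof -
      have "(\<integral>\<^sup>+ y. ennreal (g y powr (real DIM('a) / \<alpha>)) \<partial>lebesgue)
          = (\<integral>\<^sup>+ x \<in> \<Omega>. ennreal (\<bar>f x\<bar> powr (real DIM('a) / \<alpha>)) \<partial>lebesgue)"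
        by (rule nn_integral_cong) (simp add: g_def indicator_def)
      then show ?thesis using f by simp
    qed
    interpret Ad: adams g \<Omega> \<rho> \<alpha> \<beta>
    proof
      show "g \<in> borel_measurable lebesgue" by (fact gm)
      show "\<And>y. 0 \<le> g y" by (simp add: g_def)
      show "\<And>y. g y \<noteq> 0 \<Longrightarrow> y \<in> \<Omega>" by (auto simp: g_def split: if_splits)
    qed (use diam rho alpha beta gn in auto)
    define u where "u x = riesz_potential_on \<alpha> \<Omega> f x" for x
    have ub: "ennreal \<bar>u x\<bar> \<le> ennreal (1/\<gamma>) * (\<integral>\<^sup>+ y. Ad.F x y \<partial>lebesgue)" if "x \<in> \<Omega>" for x
      using riesz_bound[of \<alpha> \<Omega> f x] gam by (simp add: u_def \<gamma>_def Ad.F_def g_def)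
    have C1eq: "Ad.C1 = C1v" by (simp add: Ad.C1_def Ad.V_def Ad.q_def C1v_def V_def q_def)
    have theq: "Ad.\<theta> = \<theta>v" by (simp add: Ad.\<theta>_def Ad.p_def \<theta>v_def p_def)
    have qeq: "Ad.q = q" by (simp add: Ad.q_def q_def)
    have lev: "hausdorff_content \<beta> {x\<in>\<Omega>. \<bar>u x\<bar> > A * real (Suc n) powr (1/q)}
                 \<le> ennreal (D * 2 powr (- \<beta> * real n))" for n
    proof -
      have L: "hausdorff_content \<beta> {x\<in>\<Omega>. \<bar>u x\<bar> > (1/\<gamma>) * (C1v * (real n powr (1/q) + 1/(1-\<theta>v)))}
           \<le> ennreal (omega_const \<beta> * 5 powr \<beta> * Ad.rK n powr \<beta>)"
        using Ad.level_bound[of u "1/\<gamma>" n] ub gam unfolding C1eq theq qeq by simp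
      have le: "(1/\<gamma>) * (C1v * (real n powr (1/q) + 1/(1-\<theta>v))) \<le> A * real (Suc n) powr (1/q)"
      proof -
        have s1: "real n powr (1/q) \<le> real (Suc n) powr (1/q)" using q by (intro powr_mono2) auto
        have s2: "1 \<le> real (Suc n) powr (1/q)" using q by (simp add: ge_one_powr_ge_zero)
        have c0: "0 \<le> 1/(1-\<theta>v)" using thv by simp
        have "real n powr (1/q) + 1/(1-\<theta>v) \<le> (1 + 1/(1-\<theta>v)) * real (Suc n) powr (1/q)"
          using s1 s2 c0 mult_left_mono[OF s2 c0] by (simp add: algebra_simps)
        moreover have "C1v * ((1 + 1/(1-\<theta>v)) * real (Suc n) powr (1/q))
            \<le> (C1v + 1) * ((1 + 1/(1-\<theta>v)) * real (Suc n) powr (1/q))"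
          using c0 by (intro mult_right_mono) auto
        ultimately have "C1v * (real n powr (1/q) + 1/(1-\<theta>v)) \<le> (C1v + 1) * ((1 + 1/(1-\<theta>v)) * real (Suc n) powr (1/q))"
          using C1v by (meson mult_left_mono order_trans)
        then have "(1/\<gamma>) * (C1v * (real n powr (1/q) + 1/(1-\<theta>v))) \<le> (1/\<gamma>) * ((C1v + 1) * ((1 + 1/(1-\<theta>v)) * real (Suc n) powr (1/q)))"
          using gam by (intro mult_left_mono) auto
        then show ?thesis by (simp add: A_def mult_ac)
      qed
      have rk: "Ad.rK n powr \<beta> = (2 * \<rho>) powr \<beta> * 2 powr (- \<beta> * real n)"
      proof -
        have "Ad.rK n = (2 * \<rho>) / 2 powr real n" by (simp add: Ad.rK_def powr_realpow)
        then have "Ad.rK n powr \<beta> = (2 * \<rho>) powr \<beta> / (2 powr real n) powr \<beta>"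
          using rho by (simp add: powr_divide)
        also have "(2 powr real n) powr \<beta> = 2 powr (\<beta> * real n)" by (simp add: powr_powr mult.commute)
        finally show ?thesis by (simp add: powr_minus divide_inverse)
      qed
      have "hausdorff_content \<beta> {x\<in>\<Omega>. \<bar>u x\<bar> > A * real (Suc n) powr (1/q)}
          \<le> hausdorff_content \<beta> {x\<in>\<Omega>. \<bar>u x\<bar> > (1/\<gamma>) * (C1v * (real n powr (1/q) + 1/(1-\<theta>v)))}"
        by (rule hc_mono) (use le in auto)
      also note L
      also have "omega_const \<beta> * 5 powr \<beta> * Ad.rK n powr \<beta> = D * 2 powr (- \<beta> * real n)"
        by (simp add: rk D_def mult_ac)
      finally show ?thesis .
    qed
    have "choquet_integral \<beta> \<Omega> (\<lambda>x. exp ((\<beta> * ln 2 / 2) / A powr q * \<bar>u x\<bar> powr q))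
       \<le> ennreal (H0 * exp (\<beta> * ln 2 / 2) + D * 2 powr (2 * \<beta>) * exp (\<beta> * ln 2 / 2) powr (-1) + 1)"
      by (rule choquet_final[OF A q beta D H0 lev tot])
    then show "choquet_integral \<beta> \<Omega>
         (\<lambda>x. exp (c' * \<bar>riesz_potential_on \<alpha> \<Omega> f x\<bar> powr (real DIM('a) / (real DIM('a) - \<alpha>))))
       \<le> ennreal C'"
      by (simp add: c'_def C'_def u_def q_def)
  qed
qed

end
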